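(* Let $(X,d)$ be a metric space and $\ell:X\to[0,+\infty)$ a lower semicontinuous function with $\inf_X\ell=0$ satisfying hypothesis $(H_0)$. Define \[u_0(x):=\inf\Big\{\sum_{n=0}^\infty\ell(x_n)d(x_n,x_{n+1}):\{x_n\}_n\in\mathcal{K}(x)\Big\},\quad x\in X,\] where $\mathcal{K}(x)=\{\{x_n\}_n\subset X: x_0=x,\ \lim_{n\to\infty}\ell(x_n)=0\}$. Then $u_0$ is a solution of $(\mathcal{G}_0)$. Moreover, the same function is obtained if $\mathcal{K}(x)$ is replaced by $\widehat{\mathcal{K}}(x)=\{\{x_n\}_n\subset X: x_0=x,\ \{\ell(x_n)\}_n \text{ is decreasing},\ \lim_{n\to\infty}\ell(x_n)=0\}$.
   Context: Global slope: $G[u](x)=\sup_{y\neq x}\frac{(u(x)-u(y))_+}{d(x,y)}$ if $u(x)<+\infty$, $G[u](x)=+\infty$ otherwise. Equation $(\mathcal{G}_0)$: $G[u]=\ell$ on $X$ with $\inf_X u=0$; a solution is a lower semicontinuous $u:X\to\mathbb{R}\cup\{+\infty\}$ with $\inf_Xu=0$ and $G[u](x)=\ell(x)$ for all $x$. Hypothesis $(H_0)$: there is a sequence $\{\bar x_n\}_n\subset X$ with $\sum_{n=0}^\infty\ell(\bar x_n)d(\bar x_n,\bar x_{n+1})<+\infty$ and $\lim_{n\to\infty}\ell(\bar x_n)=0$. *)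

theory Defs
  imports "HOL-Analysis.Analysis" "HOL-Library.Extended_Real"
begin

definition lsc :: "('a::topological_space \<Rightarrow> 'b::linorder) \<Rightarrow> bool" where
  "lsc f \<longleftrightarrow> (\<forall>x c. c < f x \<longrightarrow> eventually (\<lambda>y. c < f y) (nhds x))"

text \<open>Global slope of u : X -> R \<union> {+\<infinity>} (values in ereal). Terms are nonnegative;
  the 0 included in the supremum only fixes the value of an empty supremum.\<close>
definition global_slope :: "('a::metric_space \<Rightarrow> ereal) \<Rightarrow> 'a \<Rightarrow> ereal" where
  "global_slope u x = (if u x = \<infinity> then \<infinity>
     else Sup (insert 0 ((\<lambda>y. max 0 (u x - u y) / ereal (dist x y)) ` {y. y \<noteq> x})))"

definition solves_G0 :: "('a::metric_space \<Rightarrow> real) \<Rightarrow> ('a \<Rightarrow> ereal) \<Rightarrow> bool" where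
  "solves_G0 l u \<longleftrightarrow> lsc u \<and> (\<forall>x. u x \<noteq> -\<infinity>) \<and> (INF x. u x) = 0 \<and>
     (\<forall>x. global_slope u x = ereal (l x))"

definition H0 :: "('a::metric_space \<Rightarrow> real) \<Rightarrow> bool" where
  "H0 l \<longleftrightarrow> (\<exists>xb::nat \<Rightarrow> 'a. summable (\<lambda>n. l (xb n) * dist (xb n) (xb (Suc n)))
      \<and> (\<lambda>n. l (xb n)) \<longlonglongrightarrow> 0)"

definition K_seq :: "('a::metric_space \<Rightarrow> real) \<Rightarrow> 'a \<Rightarrow> (nat \<Rightarrow> 'a) set" where
  "K_seq l x = {xs. xs 0 = x \<and> (\<lambda>n. l (xs n)) \<longlonglongrightarrow> 0}"

definition K_hat :: "('a::metric_space \<Rightarrow> real) \<Rightarrow> 'a \<Rightarrow> (nat \<Rightarrow> 'a) set" where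
  "K_hat l x = {xs. xs 0 = x \<and> decseq (\<lambda>n. l (xs n)) \<and> (\<lambda>n. l (xs n)) \<longlonglongrightarrow> 0}"

definition chain_cost :: "('a::metric_space \<Rightarrow> real) \<Rightarrow> (nat \<Rightarrow> 'a) \<Rightarrow> ereal" where
  "chain_cost l xs = (\<Sum>n. ereal (l (xs n) * dist (xs n) (xs (Suc n))))"

definition u0 :: "('a::metric_space \<Rightarrow> real) \<Rightarrow> 'a \<Rightarrow> ereal" where
  "u0 l x = (INF xs \<in> K_seq l x. chain_cost l xs)"

definition u0_hat :: "('a::metric_space \<Rightarrow> real) \<Rightarrow> 'a \<Rightarrow> ereal" where
  "u0_hat l x = (INF xs \<in> K_hat l x. chain_cost l xs)"

end

theory Submission
  imports Defs
begin

lemma nonneg_not_summable_inf: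
  fixes t :: "nat \<Rightarrow> real"
  assumes "\<And>i. t i \<ge> 0" "\<not> summable t"
  shows "(\<Sum>i. ereal (t i)) = \<infinity>"
  using summable_ereal assms by blast

lemma ereal_split:
  fixes t :: "nat \<Rightarrow> real"
  assumes nn: "\<And>i. t i \<ge> 0"
  shows "(\<Sum>i. ereal (t i)) = ereal (\<Sum>i<k. t i) + (\<Sum>i. ereal (t (i + k)))"
proof (cases "summable t")
  case True
  then have s: "summable (\<lambda>i. t (i + k))" by (simp add: summable_iff_shift)
  show ?thesis using True s suminf_split_initial_segment[OF True, of k]
    by (simp add: suminf_ereal')
next
  case False
  then have s: "\<not> summable (\<lambda>i. t (i + k))" by (simp add: summable_iff_shift)
  show ?thesis using nonneg_not_summable_inf[OF nn False] nonneg_not_summable_inf[of "\<lambda>i. t (i+k)", OF nn s]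
    by simp
qed

lemma dist_chain:
  fixes xs :: "nat \<Rightarrow> 'a::metric_space"
  shows "a \<le> b \<Longrightarrow> dist (xs a) (xs b) \<le> (\<Sum>i\<in>{a..<b}. dist (xs i) (xs (Suc i)))"
proof (induction b)
  case 0 then show ?case by simp
next
  case (Suc b)
  show ?case
  proof (cases "a = Suc b")
    case True then show ?thesis by simp
  next
    case False
    then have "a \<le> b" using Suc by simp
    then have "dist (xs a) (xs (Suc b)) \<le> dist (xs a) (xs b) + dist (xs b) (xs (Suc b))"
      by (simp add: dist_triangle)
    also have "\<dots> \<le> (\<Sum>i\<in>{a..<b}. dist (xs i) (xs (Suc i))) + dist (xs b) (xs (Suc b))"
      using Suc.IH[OF \<open>a \<le> b\<close>] by simp
    also have "\<dots> = (\<Sum>i\<in>{a..<Suc b}. dist (xs i) (xs (Suc i)))"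
      using \<open>a \<le> b\<close> by simp
    finally show ?thesis .
  qed
qed

lemma decr_sub:
  fixes l :: "'a::metric_space \<Rightarrow> real"
  assumes nn: "\<And>x. l x \<ge> 0" and lim: "(\<lambda>n. l (xs n)) \<longlonglongrightarrow> 0"
  shows "\<exists>ys. ys 0 = xs 0 \<and> decseq (\<lambda>n. l (ys n)) \<and> (\<lambda>n. l (ys n)) \<longlonglongrightarrow> 0 \<and> chain_cost l ys \<le> chain_cost l xs"
proof -
  define nxt where "nxt k = (if \<exists>m>k. l (xs m) \<le> l (xs k) then LEAST m. m > k \<and> l (xs m) \<le> l (xs k) else k)" for k
  have n1: "k \<le> nxt k \<and> l (xs (nxt k)) \<le> l (xs k)" for k
  proof (cases "\<exists>m>k. l (xs m) \<le> l (xs k)")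
    case True
    then have "nxt k > k \<and> l (xs (nxt k)) \<le> l (xs k)"
      unfolding nxt_def using LeastI_ex[OF True] by simp
    then show ?thesis by simp
  qed (auto simp add: nxt_def)
  have n2: "l (xs k) \<le> l (xs j)" if "k \<le> j" "j < nxt k" for k j
  proof (cases "j = k")
    case False
    show ?thesis
    proof (cases "\<exists>m>k. l (xs m) \<le> l (xs k)")
      case True
      then have "\<not> (j > k \<and> l (xs j) \<le> l (xs k))"
        using not_less_Least[of j "\<lambda>m. m > k \<and> l (xs m) \<le> l (xs k)"] that unfolding nxt_def by auto
      then show ?thesis using that False by auto
    next
      case False
      then have "nxt k = k" unfolding nxt_def by (simp only: if_False) 
      then show ?thesis using that by simp
    qed
  qed simp
  have n3: "k < nxt k" if "l (xs k) > 0" for k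
  proof -
    have "eventually (\<lambda>n. l (xs n) < l (xs k)) sequentially"
      using order_tendstoD(2)[OF lim that] .
    then obtain N where "\<And>n. n \<ge> N \<Longrightarrow> l (xs n) < l (xs k)" by (auto simp: eventually_sequentially)
    then have ex: "\<exists>m>k. l (xs m) \<le> l (xs k)"
      by (intro exI[of _ "max N (Suc k)"]) (simp add: less_imp_le)
    then show ?thesis unfolding nxt_def using LeastI_ex[OF ex] by simp
  qed
  define n where "n K = (nxt ^^ K) 0" for K
  have nS: "n (Suc K) = nxt (n K)" for K by (simp add: n_def)
  have n0: "n 0 = 0" by (simp add: n_def)
  define ys where "ys K = xs (n K)" for K
  have dec: "decseq (\<lambda>K. l (ys K))"
    unfolding decseq_Suc_iff ys_def nS using n1 by blast
  have lim2: "(\<lambda>K. l (ys K)) \<longlonglongrightarrow> 0"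
  proof (cases "\<exists>K. l (ys K) = 0")
    case True
    then obtain K where K: "l (ys K) = 0" by blast
    have "eventually (\<lambda>K'. l (ys K') = 0) sequentially"
      unfolding eventually_sequentially
    proof (intro exI allI impI)
      fix K' assume "K \<le> K'"
      then have "l (ys K') \<le> l (ys K)" using dec by (simp add: decseq_def)
      then show "l (ys K') = 0" using K nn[of "ys K'"] by simp
    qed
    then show ?thesis by (rule tendsto_eventually)
  next
    case False
    then have "l (ys K) > 0" for K using nn[of "ys K"] by (simp add: order_le_less)
    then have "strict_mono n" unfolding strict_mono_Suc_iff nS using n3 by (simp add: ys_def)
    from LIMSEQ_subseq_LIMSEQ[OF lim this] show ?thesis by (simp add: ys_def o_def)
  qed
  define t where "t j = l (xs j) * dist (xs j) (xs (Suc j))" for j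
  define s where "s K = l (ys K) * dist (ys K) (ys (Suc K))" for K
  have tnn: "t j \<ge> 0" for j using nn by (simp add: t_def)
  have snn: "s j \<ge> 0" for j using nn by (simp add: s_def)
  have step: "s K \<le> (\<Sum>j\<in>{n K..<n (Suc K)}. t j)" for K
  proof -
    have le: "n K \<le> n (Suc K)" using n1 nS by simp
    have "s K = l (xs (n K)) * dist (xs (n K)) (xs (n (Suc K)))" by (simp add: s_def ys_def)
    also have "\<dots> \<le> l (xs (n K)) * (\<Sum>j\<in>{n K..<n (Suc K)}. dist (xs j) (xs (Suc j)))"
      by (intro mult_left_mono dist_chain le nn)
    also have "\<dots> = (\<Sum>j\<in>{n K..<n (Suc K)}. l (xs (n K)) * dist (xs j) (xs (Suc j)))"
      by (simp add: sum_distrib_left)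
    also have "\<dots> \<le> (\<Sum>j\<in>{n K..<n (Suc K)}. t j)"
      unfolding t_def
      by (intro sum_mono mult_right_mono) (use n2 nS in auto)
    finally show ?thesis .
  qed
  have part: "(\<Sum>K<N. s K) \<le> (\<Sum>j\<in>{0..<n N}. t j)" for N
  proof (induction N)
    case 0 then show ?case by (simp add: n0)
  next
    case (Suc N)
    have le: "n N \<le> n (Suc N)" using n1 nS by simp
    have "(\<Sum>K<Suc N. s K) = (\<Sum>K<N. s K) + s N" by simp
    also have "\<dots> \<le> (\<Sum>j\<in>{0..<n N}. t j) + (\<Sum>j\<in>{n N..<n (Suc N)}. t j)"
      using Suc.IH step[of N] by simp
    also have "\<dots> = (\<Sum>j\<in>{0..<n (Suc N)}. t j)"
      using le by (simp add: sum.atLeastLessThan_concat)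
    finally show ?case .
  qed
  have cost: "chain_cost l ys \<le> chain_cost l xs"
  proof -
    have "chain_cost l ys = (\<Sum>K. ereal (s K))" by (simp add: chain_cost_def s_def)
    also have "\<dots> \<le> (\<Sum>j. ereal (t j))"
    proof (rule suminf_bound)
      show "\<forall>N. (\<Sum>K<N. ereal (s K)) \<le> (\<Sum>j. ereal (t j))"
      proof
        fix N
        have "(\<Sum>K<N. ereal (s K)) = ereal (\<Sum>K<N. s K)" by simp
        also have "\<dots> \<le> ereal (\<Sum>j<n N. t j)" using part[of N] by (simp add: atLeast0LessThan)
        also have "\<dots> = (\<Sum>j<n N. ereal (t j))" by simp
        also have "\<dots> \<le> (\<Sum>j. ereal (t j))" by (rule suminf_upper) (simp add: tnn)
        finally show "(\<Sum>K<N. ereal (s K)) \<le> (\<Sum>j. ereal (t j))" .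
      qed
    qed (simp add: snn)
    also have "\<dots> = chain_cost l xs" by (simp add: chain_cost_def t_def)
    finally show ?thesis .
  qed
  show ?thesis
    using dec lim2 cost n0 by (intro exI[of _ ys]) (simp add: ys_def)
qed

lemma prepend_cost:
  fixes l :: "'a::metric_space \<Rightarrow> real"
  assumes nn: "\<And>x. l x \<ge> 0"
  shows "chain_cost l (\<lambda>n. case n of 0 \<Rightarrow> x | Suc m \<Rightarrow> ys m) = ereal (l x * dist x (ys 0)) + chain_cost l ys"
  unfolding chain_cost_def
  by (subst ereal_split[where k=1]) (simp_all add: nn)

lemma prepend_K:
  assumes "ys \<in> K_seq l y"
  shows "(\<lambda>n. case n of 0 \<Rightarrow> x | Suc m \<Rightarrow> ys m) \<in> K_seq l x"
proof -
  have "(\<lambda>n. l (ys n)) \<longlonglongrightarrow> 0" using assms by (simp add: K_seq_def)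
  then have "(\<lambda>n. l ((\<lambda>n. case n of 0 \<Rightarrow> x | Suc m \<Rightarrow> ys m) (Suc n))) \<longlonglongrightarrow> 0" by simp
  then have "(\<lambda>n. l ((\<lambda>n. case n of 0 \<Rightarrow> x | Suc m \<Rightarrow> ys m) n)) \<longlonglongrightarrow> 0"
    by (rule LIMSEQ_imp_Suc)
  then show ?thesis by (simp add: K_seq_def)
qed

lemma cost_nonneg:
  assumes nn: "\<And>x. l x \<ge> 0"
  shows "0 \<le> chain_cost l xs"
  unfolding chain_cost_def by (rule suminf_0_le) (simp add: nn)

lemma u0_nonneg:
  assumes nn: "\<And>x. l x \<ge> 0"
  shows "0 \<le> u0 l x"
  unfolding u0_def by (rule INF_greatest) (rule cost_nonneg[OF nn])

lemma ereal_sub_aux: "(a::ereal) \<le> ereal c + b \<Longrightarrow> a - ereal c \<le> b"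
  by (cases a; cases b) auto

lemma ereal_sub_aux2: "(a::ereal) - ereal c \<le> b \<Longrightarrow> a \<le> ereal c + b"
  by (cases a; cases b) auto

lemma u0_tri:
  fixes l :: "'a::metric_space \<Rightarrow> real"
  assumes nn: "\<And>x. l x \<ge> 0"
  shows "u0 l x \<le> ereal (l x * dist x y) + u0 l y"
proof -
  have "u0 l x - ereal (l x * dist x y) \<le> u0 l y"
    unfolding u0_def[of l y]
  proof (rule INF_greatest)
    fix ys assume ys: "ys \<in> K_seq l y"
    then have y0: "ys 0 = y" by (simp add: K_seq_def)
    have "u0 l x \<le> chain_cost l (\<lambda>n. case n of 0 \<Rightarrow> x | Suc m \<Rightarrow> ys m)"
      unfolding u0_def by (rule INF_lower) (rule prepend_K[OF ys])
    also have "\<dots> = ereal (l x * dist x y) + chain_cost l ys"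
      using prepend_cost[of l, OF nn] y0 by simp
    finally show "u0 l x - ereal (l x * dist x y) \<le> chain_cost l ys"
      by (rule ereal_sub_aux)
  qed
  then show ?thesis by (rule ereal_sub_aux2)
qed

lemma u0_fin:
  fixes l :: "'a::metric_space \<Rightarrow> real"
  assumes nn: "\<And>x. l x \<ge> 0" and H: "H0 l"
  shows "u0 l x < \<infinity>"
proof -
  obtain xb :: "nat \<Rightarrow> 'a" where s: "summable (\<lambda>n. l (xb n) * dist (xb n) (xb (Suc n)))"
    and lim: "(\<lambda>n. l (xb n)) \<longlonglongrightarrow> 0" using H by (auto simp: H0_def)
  have "xb \<in> K_seq l (xb 0)" using lim by (simp add: K_seq_def)
  then have "u0 l (xb 0) \<le> chain_cost l xb" unfolding u0_def by (rule INF_lower)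
  also have "\<dots> < \<infinity>" unfolding chain_cost_def using suminf_ereal_finite[OF s] by (simp add: less_top)
  finally have "u0 l (xb 0) < \<infinity>" .
  moreover have "u0 l x \<le> ereal (l x * dist x (xb 0)) + u0 l (xb 0)" by (rule u0_tri[where l=l, OF nn])
  ultimately show ?thesis by (cases "u0 l (xb 0)") auto
qed

lemma u0_lsc:
  fixes l :: "'a::metric_space \<Rightarrow> real"
  assumes nn: "\<And>x. l x \<ge> 0" and H: "H0 l"
  shows "lsc (u0 l)"
  unfolding lsc_def
proof (intro allI impI)
  fix x and c :: ereal
  assume c: "c < u0 l x"
  obtain r where r: "u0 l x = ereal r" using u0_fin[where l=l, OF nn H, of x] u0_nonneg[where l=l, OF nn, of x]
    by (cases "u0 l x") auto
  show "eventually (\<lambda>y. c < u0 l y) (nhds x)"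
  proof (cases c)
    case MInf
    then show ?thesis using u0_nonneg[where l=l, OF nn] by (simp add: less_le_trans[of _ 0])
  next
    case PInf then show ?thesis using c by simp
  next
    case (real c')
    then have cr: "c' < r" using c r by simp
    define e where "e = (r - c') / (l x + 1)"
    have lx1: "l x + 1 > 0" using nn[of x] by simp
    have e: "e > 0" using cr lx1 by (simp add: e_def)
    show ?thesis
      unfolding eventually_nhds_metric
    proof (intro exI[of _ e] conjI allI impI)
      fix y assume dy: "dist y x < e"
      have "l x * dist x y \<le> (l x + 1) * dist x y" by (simp add: mult_right_mono)
      also have "\<dots> < (l x + 1) * e" using dy lx1 by (simp add: dist_commute)
      also have "\<dots> = r - c'" using lx1 by (simp add: e_def)
      finally have lt: "l x * dist x y < r - c'" .
      have "u0 l x \<le> ereal (l x * dist x y) + u0 l y" by (rule u0_tri[where l=l, OF nn])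
      then show "c < u0 l y" using lt r real
        by (cases "u0 l y") auto
    qed (rule e)
  qed
qed

lemma u0_inf:
  fixes l :: "'a::metric_space \<Rightarrow> real"
  assumes nn: "\<And>x. l x \<ge> 0" and H: "H0 l"
  shows "(INF x. u0 l x) = 0"
proof (rule antisym)
  show "0 \<le> (INF x. u0 l x)" by (rule INF_greatest) (rule u0_nonneg[where l=l, OF nn])
  obtain xb :: "nat \<Rightarrow> 'a" where s: "summable (\<lambda>n. l (xb n) * dist (xb n) (xb (Suc n)))"
    and lim: "(\<lambda>n. l (xb n)) \<longlonglongrightarrow> 0" using H by (auto simp: H0_def)
  show "(INF x. u0 l x) \<le> 0"
  proof (rule ereal_le_epsilon2)
    fix e :: real assume e: "0 < e"
    obtain N where N: "\<And>n. n \<ge> N \<Longrightarrow> norm (\<Sum>i. l (xb (i + n)) * dist (xb (i + n)) (xb (Suc (i + n)))) < e"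
      using suminf_exist_split[OF e s] by auto
    have sN: "summable (\<lambda>i. l (xb (i + N)) * dist (xb (i + N)) (xb (Suc (i + N))))"
      using summable_iff_shift[where f="\<lambda>n. l (xb n) * dist (xb n) (xb (Suc n))" and k=N] s by simp
    have "(\<lambda>i. xb (i + N)) \<in> K_seq l (xb N)"
      using LIMSEQ_ignore_initial_segment[OF lim, of N] by (simp add: K_seq_def)
    then have "u0 l (xb N) \<le> chain_cost l (\<lambda>i. xb (i + N))" unfolding u0_def by (rule INF_lower)
    also have "\<dots> = ereal (\<Sum>i. l (xb (i + N)) * dist (xb (i + N)) (xb (Suc (i + N))))"
      unfolding chain_cost_def using suminf_ereal'[OF sN] by simp
    also have "\<dots> \<le> ereal e" using N[of N] by simp
    finally have "u0 l (xb N) \<le> ereal e" .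
    then have "(INF x. u0 l x) \<le> ereal e" by (meson INF_lower UNIV_I order_trans)
    then show "(INF x. u0 l x) \<le> 0 + ereal e" by simp
  qed
qed

lemma slope_lower:
  fixes l :: "'a::metric_space \<Rightarrow> real"
  assumes nn: "\<And>x. l x \<ge> 0" and lsc_l: "lsc l" and H: "H0 l"
    and e0: "0 \<le> e" and el: "e < l x"
  shows "\<exists>z. z \<noteq> x \<and> ereal e < max 0 (u0 l x - u0 l z) / ereal (dist x z)"
proof -
  define e' where "e' = (e + l x) / 2"
  have e'1: "e < e'" and e'2: "e' < l x" using el by (auto simp: e'_def)
  have "eventually (\<lambda>y. e' < l y) (nhds x)"
    using lsc_l e'2 unfolding lsc_def by blast
  then obtain r where r0: "r > 0" and rb: "\<And>y. dist y x < r \<Longrightarrow> e' < l y"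
    unfolding eventually_nhds_metric by auto
  define \<delta> where "\<delta> = (e' - e) * r"
  have \<delta>: "\<delta> > 0" using e'1 r0 by (simp add: \<delta>_def)
  obtain U where U: "u0 l x = ereal U" using u0_fin[where l=l, OF nn H, of x] u0_nonneg[where l=l, OF nn, of x]
    by (cases "u0 l x") auto
  have "u0 l x < ereal (U + \<delta>)" using U \<delta> by simp
  then obtain xs where xs: "xs \<in> K_seq l x" and cxs: "chain_cost l xs < ereal (U + \<delta>)"
    unfolding u0_def INF_less_iff by blast
  have x0: "xs 0 = x" and lim: "(\<lambda>n. l (xs n)) \<longlonglongrightarrow> 0" using xs by (auto simp: K_seq_def)
  have "eventually (\<lambda>n. l (xs n) < e') sequentially"
    using order_tendstoD(2)[OF lim] e'1 e0 by simp
  then obtain N where "\<And>n. n \<ge> N \<Longrightarrow> l (xs n) < e'" by (auto simp: eventually_sequentially)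
  then have exN: "r \<le> dist (xs N) x" using rb[of "xs N"] by force
  define M where "M = (LEAST m. r \<le> dist (xs m) x)"
  have M1: "r \<le> dist (xs M) x" unfolding M_def by (rule LeastI[of _ N]) (rule exN)
  have M2: "e' < l (xs n)" if "n < M" for n
  proof -
    have "\<not> r \<le> dist (xs n) x" using not_less_Least[of n "\<lambda>m. r \<le> dist (xs m) x"] that
      unfolding M_def by blast
    then show ?thesis using rb by simp
  qed
  define z where "z = xs M"
  define D where "D = dist x z"
  have D: "r \<le> D" using M1 by (simp add: D_def z_def dist_commute)
  have zx: "z \<noteq> x" using D r0 by (auto simp: D_def)
  obtain V where V: "u0 l z = ereal V" using u0_fin[where l=l, OF nn H, of z] u0_nonneg[where l=l, OF nn, of z]
    by (cases "u0 l z") auto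
  define P where "P = (\<Sum>i<M. l (xs i) * dist (xs i) (xs (Suc i)))"
  have "e' * D \<le> e' * (\<Sum>i\<in>{0..<M}. dist (xs i) (xs (Suc i)))"
    using dist_chain[of 0 M xs] x0 e'1 e0 by (intro mult_left_mono) (auto simp: D_def z_def)
  also have "\<dots> = (\<Sum>i\<in>{0..<M}. e' * dist (xs i) (xs (Suc i)))" by (simp add: sum_distrib_left)
  also have "\<dots> \<le> P" unfolding P_def atLeast0LessThan
    by (intro sum_mono mult_right_mono) (auto intro: less_imp_le M2)
  finally have PD: "e' * D \<le> P" .
  have "(\<lambda>i. xs (i + M)) \<in> K_seq l z"
    using LIMSEQ_ignore_initial_segment[OF lim, of M] by (simp add: K_seq_def z_def)
  then have "u0 l z \<le> chain_cost l (\<lambda>i. xs (i + M))" unfolding u0_def by (rule INF_lower)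
  then have "ereal P + u0 l z \<le> chain_cost l xs"
    unfolding chain_cost_def P_def
    by (subst ereal_split[where k=M]) (simp_all add: nn add_left_mono)
  then have "ereal P + ereal V < ereal (U + \<delta>)" using cxs V by (metis order_le_less_trans)
  then have ineq: "P + V < U + \<delta>" by simp
  have "\<delta> \<le> (e' - e) * D" unfolding \<delta>_def using D e'1 by (intro mult_left_mono) auto
  then have key: "e * D < U - V" using ineq PD by (simp add: algebra_simps)
  have Dpos: "D > 0" using D r0 by simp
  have pos: "U - V > 0" using key e0 Dpos by (smt (verit) mult_nonneg_nonneg)
  have "e < (U - V) / D" using key Dpos by (simp add: field_simps)
  then have "ereal e < max 0 (u0 l x - u0 l z) / ereal (dist x z)"
    using U V pos Dpos by (simp add: D_def max_def)
  then show ?thesis using zx by blast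
qed

lemma slope_upper_elem:
  fixes l :: "'a::metric_space \<Rightarrow> real"
  assumes nn: "\<And>x. l x \<ge> 0" and H: "H0 l" and yx: "y \<noteq> x"
  shows "max 0 (u0 l x - u0 l y) / ereal (dist x y) \<le> ereal (l x)"
proof -
  obtain a where a: "u0 l x = ereal a" using u0_fin[where l=l, OF nn H, of x] u0_nonneg[where l=l, OF nn, of x]
    by (cases "u0 l x") auto
  obtain b where b: "u0 l y = ereal b" using u0_fin[where l=l, OF nn H, of y] u0_nonneg[where l=l, OF nn, of y]
    by (cases "u0 l y") auto
  have "u0 l x \<le> ereal (l x * dist x y) + u0 l y" by (rule u0_tri[where l=l, OF nn])
  then have ab: "a - b \<le> l x * dist x y" using a b by simp
  have d: "dist x y > 0" using yx by simp
  have "max 0 (a - b) / dist x y \<le> l x"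
    using ab d nn[of x] by (simp add: divide_le_eq max_def)
  then show ?thesis using a b d nn[of x] by (simp add: max_def split: if_splits)
qed

theorem proposition3p9:
  fixes l :: "'a::metric_space \<Rightarrow> real"
  assumes nonneg: "\<And>x. l x \<ge> 0"
    and lsc_l: "lsc l"
    and inf_l: "(INF x. l x) = 0"
    and H0: "H0 l"
  shows "solves_G0 l (u0 l) \<and> u0_hat l = u0 l"
proof -
  have slope: "global_slope (u0 l) x = ereal (l x)" for x
  proof -
    have nf: "u0 l x \<noteq> \<infinity>" using u0_fin[where l=l, OF nonneg H0, of x] by simp
    let ?S = "insert 0 ((\<lambda>y. max 0 (u0 l x - u0 l y) / ereal (dist x y)) ` {y. y \<noteq> x})"
    have "Sup ?S = ereal (l x)"
    proof (rule antisym)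
      show "Sup ?S \<le> ereal (l x)"
        using slope_upper_elem[where l=l, OF nonneg H0] nonneg[of x] by (auto intro!: Sup_least)
      show "ereal (l x) \<le> Sup ?S"
        unfolding le_Sup_iff
      proof (intro allI impI)
        fix y assume y: "y < ereal (l x)"
        show "\<exists>a\<in>?S. y < a"
        proof (cases "y < 0")
          case True then show ?thesis by blast
        next
          case False
          then obtain e where e: "y = ereal e" "0 \<le> e" "e < l x" using y
            by (cases y) auto
          from slope_lower[where l=l, OF nonneg lsc_l H0 e(2,3)] obtain z where
            "z \<noteq> x" "ereal e < max 0 (u0 l x - u0 l z) / ereal (dist x z)" by blast
          then show ?thesis using e(1) by blast
        qed
      qed
    qed
    then show ?thesis unfolding global_slope_def using nf by simp
  qed
  have G: "solves_G0 l (u0 l)"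
    unfolding solves_G0_def
    using u0_lsc[where l=l, OF nonneg H0] u0_inf[where l=l, OF nonneg H0] slope
      u0_nonneg[where l=l, OF nonneg]
    by (auto simp: less_le_trans[of "-\<infinity>" 0])
  have hat: "u0_hat l x = u0 l x" for x
  proof (rule antisym)
    show "u0_hat l x \<le> u0 l x"
      unfolding u0_def
    proof (rule INF_greatest)
      fix xs assume xs: "xs \<in> K_seq l x"
      then have x0: "xs 0 = x" and lim: "(\<lambda>n. l (xs n)) \<longlonglongrightarrow> 0" by (auto simp: K_seq_def)
      obtain ys where ys: "ys 0 = xs 0" "decseq (\<lambda>n. l (ys n))" "(\<lambda>n. l (ys n)) \<longlonglongrightarrow> 0"
        "chain_cost l ys \<le> chain_cost l xs"
        using decr_sub[where l=l, OF nonneg lim] by blast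
      have "ys \<in> K_hat l x" using ys x0 by (simp add: K_hat_def)
      then have "u0_hat l x \<le> chain_cost l ys" unfolding u0_hat_def by (rule INF_lower)
      then show "u0_hat l x \<le> chain_cost l xs" using ys(4) by simp
    qed
    show "u0 l x \<le> u0_hat l x"
      unfolding u0_def u0_hat_def
      by (rule INF_superset_mono) (auto simp: K_seq_def K_hat_def)
  qed
  show ?thesis using G hat by auto
qed

end
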